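(* Let $A\in\mathbb{R}^{n\times n}$ be entrywise nonnegative and nonsingular. Then $A$ is a Karamardian matrix if and only if $A$ is a $Q$-matrix (equivalently, if and only if all diagonal entries of $A$ are positive).
   Context: $A$ is a $Q$-matrix if for every $q\in\mathbb{R}^n$ the linear complementarity problem LCP$(A,q)$ (find $x\ge 0$ with $y=Ax+q\ge 0$ and $x^Ty=0$) has a solution. For $M\in\mathbb{R}^{n\times n}$ let $K_M=\mathbb{R}^n_+\cap R(M)$ and $K_M^*=\{y: x^Ty\ge 0\ \forall x\in K_M\}$ (one has $K_M^*=\mathbb{R}^n_++N(M^T)$, with interior $\{a+b: a>0,\ b\in N(M^T)\}$). For $q$, LCP$(M,K_M,q)$ is to find $x\in K_M$ with $Mx+q\in K_M^*$ and $x^T(Mx+q)=0$. $M$ is a Karamardian matrix if $K_M\ne\{0\}$ and there exists $d$ in the interior of $K_M^*$ such that both LCP$(M,K_M,0)$ and LCP$(M,K_M,d)$ have $x=0$ as their only solution. *)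

theory Defs
  imports "HOL-Analysis.Analysis"
begin

definition nonneg_vec :: "real ^ 'n \<Rightarrow> bool" where
  "nonneg_vec x \<longleftrightarrow> (\<forall>i. x $ i \<ge> 0)"

definition lcp_sol :: "real ^ 'n ^ 'n \<Rightarrow> real ^ 'n \<Rightarrow> real ^ 'n \<Rightarrow> bool" where
  "lcp_sol A q x \<longleftrightarrow> nonneg_vec x \<and> nonneg_vec (A *v x + q) \<and> x \<bullet> (A *v x + q) = 0"

definition Q_matrix :: "real ^ 'n ^ 'n \<Rightarrow> bool" where
  "Q_matrix A \<longleftrightarrow> (\<forall>q. \<exists>x. lcp_sol A q x)"

definition K_cone :: "real ^ 'n ^ 'n \<Rightarrow> (real ^ 'n) set" where
  "K_cone M = {x. nonneg_vec x} \<inter> range (\<lambda>z. M *v z)"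

definition K_dual :: "real ^ 'n ^ 'n \<Rightarrow> (real ^ 'n) set" where
  "K_dual M = {y. \<forall>x\<in>K_cone M. x \<bullet> y \<ge> 0}"

definition cone_lcp_sol :: "real ^ 'n ^ 'n \<Rightarrow> real ^ 'n \<Rightarrow> real ^ 'n \<Rightarrow> bool" where
  "cone_lcp_sol M q x \<longleftrightarrow> x \<in> K_cone M \<and> M *v x + q \<in> K_dual M \<and> x \<bullet> (M *v x + q) = 0"

definition Karamardian :: "real ^ 'n ^ 'n \<Rightarrow> bool" where
  "Karamardian M \<longleftrightarrow> K_cone M \<noteq> {0} \<and>
     (\<exists>d \<in> interior (K_dual M).
        (\<forall>x. cone_lcp_sol M 0 x \<longleftrightarrow> x = 0) \<and> (\<forall>x. cone_lcp_sol M d x \<longleftrightarrow> x = 0))"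

end

theory Submission
  imports Defs
begin

lemma inner_cart_sum: "(x::real^'n) \<bullet> y = (\<Sum>i\<in>UNIV. x$i * y$i)"
  by (simp add: inner_vec_def)

lemma mv_nth: "(A *v x) $ i = (\<Sum>j\<in>UNIV. A$i$j * x$j)"
  by (simp add: matrix_vector_mult_def)

lemma compl_terms:
  fixes x w :: "real^'n"
  assumes "nonneg_vec x" "nonneg_vec w" "x \<bullet> w = 0"
  shows "x$j * w$j = 0"
proof -
  have "(\<Sum>i\<in>UNIV. x$i * w$i) = 0" using assms(3) by (simp add: inner_cart_sum)
  moreover have "\<forall>i\<in>UNIV. 0 \<le> x$i * w$i" using assms(1,2) by (simp add: nonneg_vec_def)
  ultimately show ?thesis using sum_nonneg_eq_0_iff[of UNIV "\<lambda>i. x$i * w$i"] by auto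
qed

lemma mv_ge_diag:
  fixes A :: "real^'n^'n"
  assumes "\<forall>i j. A $ i $ j \<ge> 0" "nonneg_vec x"
  shows "(A *v x)$i \<ge> A$i$i * x$i"
proof -
  have "A$i$i * x$i \<le> (\<Sum>j\<in>UNIV. A$i$j * x$j)"
    by (rule member_le_sum[where f="\<lambda>j. A$i$j * x$j"]) (use assms in \<open>auto simp: nonneg_vec_def\<close>)
  then show ?thesis by (simp add: mv_nth)
qed

lemma mv_nonneg:
  fixes A :: "real^'n^'n"
  assumes "\<forall>i j. A $ i $ j \<ge> 0" "nonneg_vec x"
  shows "nonneg_vec (A *v x)"
  using assms by (auto simp: nonneg_vec_def mv_nth intro!: sum_nonneg)

lemma nonneg_K_dual: "nonneg_vec y \<Longrightarrow> y \<in> K_dual M"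
  by (auto simp: K_dual_def K_cone_def nonneg_vec_def inner_cart_sum intro!: sum_nonneg)

lemma K_cone_inv:
  fixes A :: "real^'n^'n"
  assumes "invertible A"
  shows "K_cone A = {x. nonneg_vec x}"
proof -
  obtain B where B: "A ** B = mat 1" using assms by (auto simp: invertible_def)
  have "y \<in> range (\<lambda>z. A *v z)" for y
    by (rule range_eqI[of _ _ "B *v y"]) (simp add: matrix_vector_mul_assoc B)
  then show ?thesis by (auto simp: K_cone_def)
qed

lemma Q_imp_diag:
  fixes A :: "real^'n^'n"
  assumes nn: "\<forall>i j. A $ i $ j \<ge> 0" and Q: "Q_matrix A"
  shows "A$i$i > 0"
proof (rule ccontr)
  assume "\<not> A$i$i > 0"
  moreover have "A$i$i \<ge> 0" using nn by simp
  ultimately have a0: "A$i$i = 0" by linarith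
  define q :: "real^'n" where "q = (\<chi> j. if j = i then -1 else 1)"
  obtain x where sol: "lcp_sol A q x" using Q by (auto simp: Q_matrix_def)
  define w where "w = A *v x + q"
  have xn: "nonneg_vec x" and wn: "nonneg_vec w" and c: "x \<bullet> w = 0"
    using sol by (auto simp: lcp_sol_def w_def)
  have "w$i \<ge> 0" using wn by (simp add: nonneg_vec_def)
  hence "(A *v x)$i \<ge> 1" by (simp add: w_def q_def)
  hence "(\<Sum>j\<in>UNIV. A$i$j * x$j) > 0" using mv_nth[of A x i] by linarith
  then obtain j where j: "A$i$j * x$j > 0"
  proof -
    assume h: "\<And>j. A$i$j * x$j > 0 \<Longrightarrow> thesis"
    assume s: "(\<Sum>j\<in>UNIV. A$i$j * x$j) > 0"
    show thesis
    proof (rule ccontr)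
      assume "\<not> thesis"
      with h have "\<forall>j\<in>UNIV. A$i$j * x$j \<le> 0" using not_le by blast
      hence "(\<Sum>j\<in>UNIV. A$i$j * x$j) \<le> 0" by (simp add: sum_nonpos)
      with s show False by simp
    qed
  qed
  have ji: "j \<noteq> i" using j a0 by auto
  have "x$j \<ge> 0" using xn by (simp add: nonneg_vec_def)
  moreover have "x$j \<noteq> 0" using j by auto
  ultimately have xj: "x$j > 0" by simp
  have "(A *v x)$j \<ge> 0" using mv_nonneg[OF nn xn] by (simp add: nonneg_vec_def)
  hence "w$j \<ge> 1" using ji by (simp add: w_def q_def)
  hence "x$j * w$j > 0" using xj by simp
  moreover have "x$j * w$j = 0" by (rule compl_terms[OF xn wn c])
  ultimately show False by simp
qed

lemma diag_imp_Q:
  fixes A :: "real^'n^'n"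
  assumes nn: "\<forall>i j. A $ i $ j \<ge> 0" and d: "\<forall>i. A$i$i > 0"
  shows "Q_matrix A"
  unfolding Q_matrix_def
proof
  fix q :: "real^'n"
  define T where "T = (\<lambda>x::real^'n. \<chi> i. max 0 (x$i - ((\<Sum>j\<in>UNIV. A$i$j * x$j) + q$i) / A$i$i))"
  define u :: "real^'n" where "u = (\<chi> i. max 0 (- q$i / A$i$i))"
  define S where "S = cbox (0::real^'n) u"
  have Sm: "x \<in> S \<longleftrightarrow> (\<forall>i. 0 \<le> x$i \<and> x$i \<le> max 0 (- q$i / A$i$i))" for x
    by (simp add: S_def mem_box_cart u_def)
  have "continuous_on S T" unfolding T_def by (intro continuous_intros) (use d in \<open>auto simp: less_le\<close>)
  moreover have "T \<in> S \<rightarrow> S"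
  proof
    fix x assume xS: "x \<in> S"
    hence xn: "nonneg_vec x" by (simp add: Sm nonneg_vec_def)
    show "T x \<in> S" unfolding Sm
    proof
      fix i
      have ge: "(\<Sum>j\<in>UNIV. A$i$j * x$j) \<ge> A$i$i * x$i" using mv_ge_diag[OF nn xn, of i] by (simp add: mv_nth)
      have ai: "A$i$i > 0" using d by simp
      have "x$i - ((\<Sum>j\<in>UNIV. A$i$j * x$j) + q$i) / A$i$i \<le> - q$i / A$i$i"
      proof -
        have "x$i - ((\<Sum>j\<in>UNIV. A$i$j * x$j) + q$i) / A$i$i = (A$i$i * x$i - (\<Sum>j\<in>UNIV. A$i$j * x$j) - q$i) / A$i$i"
          using ai by (simp add: field_simps)
        also have "\<dots> \<le> - q$i / A$i$i" using ai ge by (intro divide_right_mono) auto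
        finally show ?thesis .
      qed
      then show "0 \<le> T x $ i \<and> T x $ i \<le> max 0 (- q $ i / A $ i $ i)"
        by (simp add: T_def)
    qed
  qed
  moreover have "compact S" "convex S" by (auto simp: S_def)
  moreover have "0 \<in> S" by (simp add: S_def u_def mem_box_cart)
  hence "S \<noteq> {}" by blast
  ultimately obtain x where xS: "x \<in> S" and fx: "T x = x"
    using brouwer[of S T] by blast
  define w where "w = A *v x + q"
  have xn: "nonneg_vec x" using xS by (simp add: Sm nonneg_vec_def)
  have key: "x$i = max 0 (x$i - w$i / A$i$i)" for i
    using arg_cong[OF fx, of "\<lambda>v. v$i"] by (simp add: T_def w_def mv_nth)
  have wi: "w$i \<ge> 0 \<and> x$i * w$i = 0" for i
  proof -
    have ai: "A$i$i > 0" using d by simp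
    show ?thesis
    proof (cases "x$i = 0")
      case True
      with key[of i] have "x$i - w$i / A$i$i \<le> 0" by (metis max.cobounded2)
      with True ai have "w$i \<ge> 0" by (simp add: divide_nonneg_pos zero_le_divide_iff)
      with True show ?thesis by simp
    next
      case False
      with key[of i] have "x$i = x$i - w$i / A$i$i" by (metis max_def)
      with ai have "w$i = 0" by simp
      then show ?thesis by simp
    qed
  qed
  have sw: "x \<bullet> w = 0"
    unfolding inner_cart_sum by (rule sum.neutral) (use wi in auto)
  have wn: "nonneg_vec w" using wi by (simp add: nonneg_vec_def)
  have "lcp_sol A q x" unfolding lcp_sol_def using xn wn sw by (simp add: w_def)
  then show "\<exists>x. lcp_sol A q x" by blast
qed

lemma Kar_imp_diag:
  fixes A :: "real^'n^'n"
  assumes nn: "\<forall>i j. A $ i $ j \<ge> 0" and inv: "invertible A" and K: "Karamardian A"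
  shows "A$i$i > 0"
proof (rule ccontr)
  assume "\<not> A$i$i > 0"
  moreover have "A$i$i \<ge> 0" using nn by simp
  ultimately have a0: "A$i$i = 0" by linarith
  have z: "\<forall>x. cone_lcp_sol A 0 x \<longleftrightarrow> x = 0" using K by (auto simp: Karamardian_def)
  define x :: "real^'n" where "x = axis i 1"
  have xn: "nonneg_vec x" by (simp add: x_def nonneg_vec_def axis_def)
  have "cone_lcp_sol A 0 x"
    unfolding cone_lcp_sol_def
  proof (intro conjI)
    show "x \<in> K_cone A" using xn K_cone_inv[OF inv] by simp
    show "A *v x + 0 \<in> K_dual A" using mv_nonneg[OF nn xn] by (simp add: nonneg_K_dual)
    have "x \<bullet> (A *v x) = (A *v x) $ i" by (simp add: x_def cart_eq_inner_axis inner_commute)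
    also have "\<dots> = A$i$i" by (simp add: x_def mv_nth axis_def if_distrib cong: if_cong)
    finally show "x \<bullet> (A *v x + 0) = 0" using a0 by simp
  qed
  with z have "x = 0" by blast
  then show False by (simp add: x_def)
qed

lemma diag_imp_Kar:
  fixes A :: "real^'n^'n"
  assumes nn: "\<forall>i j. A $ i $ j \<ge> 0" and inv: "invertible A" and d: "\<forall>i. A$i$i > 0"
  shows "Karamardian A"
proof -
  define e :: "real^'n" where "e = (\<chi> i. 1)"
  have en: "nonneg_vec e" by (simp add: e_def nonneg_vec_def)
  have Kc: "K_cone A = {x. nonneg_vec x}" by (rule K_cone_inv[OF inv])
  have e0: "e \<noteq> 0" by (simp add: e_def vec_eq_iff)
  have c1: "K_cone A \<noteq> {0}" using Kc en e0 by auto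
  have int: "e \<in> interior (K_dual A)"
  proof (rule interiorI[of "ball e 1"])
    show "ball e 1 \<subseteq> K_dual A"
    proof
      fix y assume "y \<in> ball e 1"
      hence n: "norm (e - y) < 1" by (simp add: dist_norm)
      have yi: "0 \<le> y$i" for i
      proof -
        have "\<bar>(e - y)$i\<bar> < 1" using component_le_norm_cart[of "e - y" i] n by linarith
        hence "\<bar>1 - y$i\<bar> < 1" by (simp add: e_def)
        thus ?thesis by (simp add: abs_less_iff)
      qed
      hence "nonneg_vec y" unfolding nonneg_vec_def by blast
      thus "y \<in> K_dual A" by (rule nonneg_K_dual)
    qed
  qed auto
  have zero_sol: "cone_lcp_sol A q 0" if "nonneg_vec q" for q
    using that Kc by (simp add: cone_lcp_sol_def nonneg_K_dual nonneg_vec_def)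
  have s0: "cone_lcp_sol A 0 x \<longleftrightarrow> x = 0" for x
  proof
    assume s: "cone_lcp_sol A 0 x"
    hence xn: "nonneg_vec x" and c: "x \<bullet> (A *v x) = 0" using Kc by (auto simp: cone_lcp_sol_def)
    show "x = 0" unfolding vec_eq_iff
    proof
      fix i
      have "x$i * (A *v x)$i = 0" by (rule compl_terms[OF xn mv_nonneg[OF nn xn] c])
      moreover have "(A *v x)$i \<ge> A$i$i * x$i" by (rule mv_ge_diag[OF nn xn])
      moreover have "x$i \<ge> 0" "A$i$i > 0" using xn d by (auto simp: nonneg_vec_def)
      ultimately have "x$i * (A$i$i * x$i) \<le> 0"
        using mult_left_mono[of "A$i$i * x$i" "(A *v x)$i" "x$i"] by linarith
      hence "A$i$i * (x$i * x$i) \<le> 0" by (simp add: ac_simps)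
      with \<open>A$i$i > 0\<close> have "x$i * x$i \<le> 0" by (simp add: mult_le_0_iff)
      thus "x$i = 0$i" using \<open>x$i \<ge> 0\<close> by (simp add: mult_le_0_iff)
    qed
  next
    assume "x = 0" thus "cone_lcp_sol A 0 x" using zero_sol[of 0] by (simp add: nonneg_vec_def)
  qed
  have s1: "cone_lcp_sol A e x \<longleftrightarrow> x = 0" for x
  proof
    assume s: "cone_lcp_sol A e x"
    hence xn: "nonneg_vec x" and c: "x \<bullet> (A *v x + e) = 0" using Kc by (auto simp: cone_lcp_sol_def)
    have wn: "nonneg_vec (A *v x + e)" using mv_nonneg[OF nn xn] by (auto simp: nonneg_vec_def e_def)
    show "x = 0" unfolding vec_eq_iff
    proof
      fix i
      have "x$i * (A *v x + e)$i = 0" by (rule compl_terms[OF xn wn c])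
      moreover have "(A *v x)$i \<ge> 0" using mv_nonneg[OF nn xn] by (simp add: nonneg_vec_def)
      ultimately show "x$i = 0$i" by (simp add: e_def)
    qed
  next
    assume "x = 0" thus "cone_lcp_sol A e x" using zero_sol[OF en] by simp
  qed
  have "\<forall>x. cone_lcp_sol A 0 x \<longleftrightarrow> x = 0" using s0 by blast
  moreover have "\<forall>x. cone_lcp_sol A e x \<longleftrightarrow> x = 0" using s1 by blast
  ultimately show ?thesis unfolding Karamardian_def using c1 int by blast
qed

theorem mainTheorem17:
  fixes A :: "real ^ 'n ^ 'n"
  assumes "\<forall>i j. A $ i $ j \<ge> 0"
    and "invertible A"
  shows "(Karamardian A \<longleftrightarrow> Q_matrix A) \<and> (Q_matrix A \<longleftrightarrow> (\<forall>i. A $ i $ i > 0))"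
proof -
  have "Q_matrix A \<longleftrightarrow> (\<forall>i. A $ i $ i > 0)"
    using Q_imp_diag[OF assms(1)] diag_imp_Q[OF assms(1)] by blast
  moreover have "Karamardian A \<longleftrightarrow> (\<forall>i. A $ i $ i > 0)"
    using Kar_imp_diag[OF assms] diag_imp_Kar[OF assms] by blast
  ultimately show ?thesis by blast
qed

end
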